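(* Assume hypotheses (A) and (B) and that $p_{ij}=p<1/(d-1)$ for all $i\ne j$ in $\{1,\dots,d\}$. Let $q=p/(1-(d-2)p)$ and, for $\gamma\in\mathbb{R}^d$ with all $\gamma_j>0$, $$\Sigma(\gamma_1,\dots,\gamma_d)=\sum_{j=1}^d\frac{\max_{1\le i\le d}\log(1+q\gamma_i)-\log(1+q\gamma_j)}{\log(1+\gamma_j)-\log(1+q\gamma_j)}.$$ Then $\gamma=(\gamma_1,\dots,\gamma_d)\in\Gamma$ if and only if $\gamma_i>0$ for all $i$ and $\Sigma(\gamma_1,\dots,\gamma_d)<1$.
   Context: Jackson network with $d$ queues: arrival rates $\lambda_i\ge0$, service rates $\mu_i>0$, routing matrix $P=(p_{ij})_{i,j=1}^d$ nonnegative with $p_{ii}=0$, $\sum_jp_{ij}\le1$, $p_{i0}=1-\sum_jp_{ij}$. Hypothesis (A): the jump-rate kernel on $\mathbb{Z}^d$ (jumps $+\epsilon^i$ at rate $\lambda_i$, $-\epsilon^i$ at rate $\mu_ip_{i0}$, $\epsilon^j-\epsilon^i$ at rate $\mu_ip_{ij}$) is irreducible (equivalently spectral radius of $P$ $<1$ and for every $i$ some $\lambda_jp^{(n)}_{ji}>0$); then the traffic equations $\nu_j=\lambda_j+\sum_i\nu_ip_{ij}$ have a unique solution with $\nu_i>0$. Hypothesis (B): $\nu_i<\mu_i$ for all $i$. $Q_{ij}$: probability that the chain on $\{0,\dots,d\}$ with transitions $p_{ij}$ ($0$ absorbing) started at $i$ ever visits $j$ (time $0$ included); in the present setting $Q_{ij}=q$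 for $i\ne j$. For $\gamma\in\mathbb{R}_+^d$, $\overrightarrow{\gamma_i}$ has components $\gamma_i^j=\log(1+Q_{ji}\gamma_i)$; $\Gamma$ is the set of $\gamma\in\mathbb{R}_+^d$ such that for every $i$ and nonzero $v\in\mathbb{R}_+^d$ with $v^i=0$, $\overrightarrow{\gamma_i}\cdot v<\max_j\overrightarrow{\gamma_j}\cdot v$. *)

theory Defs
  imports Complex_Main
begin

text \<open>Queues are indexed by 1..d (index 0 is the exterior/absorbing state).
  Vectors in R^d / Z^d are functions on nat, only their values on 1..d matter.\<close>

definition exit_prob :: "nat \<Rightarrow> (nat \<Rightarrow> nat \<Rightarrow> real) \<Rightarrow> nat \<Rightarrow> real" where
  "exit_prob d P i = 1 - (\<Sum>j\<in>{1..d}. P i j)"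

definition jackson_network ::
  "nat \<Rightarrow> (nat \<Rightarrow> real) \<Rightarrow> (nat \<Rightarrow> real) \<Rightarrow> (nat \<Rightarrow> nat \<Rightarrow> real) \<Rightarrow> bool" where
  "jackson_network d lam mu P \<longleftrightarrow>
     (\<forall>i\<in>{1..d}. lam i \<ge> 0 \<and> mu i > 0 \<and> P i i = 0 \<and> (\<Sum>j\<in>{1..d}. P i j) \<le> 1) \<and>
     (\<forall>i\<in>{1..d}. \<forall>j\<in>{1..d}. P i j \<ge> 0)"

definition unit_vec :: "nat \<Rightarrow> nat \<Rightarrow> int" where
  "unit_vec i = (\<lambda>k. if k = i then 1 else 0)"

definition jump ::
  "nat \<Rightarrow> (nat \<Rightarrow> real) \<Rightarrow> (nat \<Rightarrow> real) \<Rightarrow> (nat \<Rightarrow> nat \<Rightarrow> real) \<Rightarrow> (nat \<Rightarrow> int) \<Rightarrow> (nat \<Rightarrow> int) \<Rightarrow> bool" where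
  "jump d lam mu P x y \<longleftrightarrow>
     (\<exists>i\<in>{1..d}.
        (y = (\<lambda>k. x k + unit_vec i k) \<and> lam i > 0) \<or>
        (y = (\<lambda>k. x k - unit_vec i k) \<and> mu i * exit_prob d P i > 0) \<or>
        (\<exists>j\<in>{1..d}. j \<noteq> i \<and> y = (\<lambda>k. x k + unit_vec j k - unit_vec i k) \<and> mu i * P i j > 0))"

definition lattice :: "nat \<Rightarrow> (nat \<Rightarrow> int) set" where
  "lattice d = {x. \<forall>k. k \<notin> {1..d} \<longrightarrow> x k = 0}"

definition hypA ::
  "nat \<Rightarrow> (nat \<Rightarrow> real) \<Rightarrow> (nat \<Rightarrow> real) \<Rightarrow> (nat \<Rightarrow> nat \<Rightarrow> real) \<Rightarrow> bool" where
  "hypA d lam mu P \<longleftrightarrow> (\<forall>x\<in>lattice d. \<forall>y\<in>lattice d. (jump d lam mu P)\<^sup>*\<^sup>* x y)"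

definition traffic_solution ::
  "nat \<Rightarrow> (nat \<Rightarrow> real) \<Rightarrow> (nat \<Rightarrow> nat \<Rightarrow> real) \<Rightarrow> (nat \<Rightarrow> real) \<Rightarrow> bool" where
  "traffic_solution d lam P nu \<longleftrightarrow>
     (\<forall>j\<in>{1..d}. nu j = lam j + (\<Sum>i\<in>{1..d}. nu i * P i j))"

definition hypB ::
  "nat \<Rightarrow> (nat \<Rightarrow> real) \<Rightarrow> (nat \<Rightarrow> real) \<Rightarrow> (nat \<Rightarrow> nat \<Rightarrow> real) \<Rightarrow> bool" where
  "hypB d lam mu P \<longleftrightarrow>
     (\<forall>nu. traffic_solution d lam P nu \<longrightarrow> (\<forall>i\<in>{1..d}. nu i < mu i))"

text \<open>Taboo transition probabilities: taboo_prob d P j n i l is the probability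
  that the chain (transitions P, 0 absorbing) started at i is at l at time n
  without having been at j at times 1..n-1.\<close>
fun taboo_prob :: "nat \<Rightarrow> (nat \<Rightarrow> nat \<Rightarrow> real) \<Rightarrow> nat \<Rightarrow> nat \<Rightarrow> nat \<Rightarrow> nat \<Rightarrow> real" where
  "taboo_prob d P j 0 i l = (if i = l then 1 else 0)"
| "taboo_prob d P j (Suc n) i l = (\<Sum>k\<in>{1..d} - {j}. taboo_prob d P j n i k * P k l)"

text \<open>Q_ij: probability that the chain started at i ever visits j (time 0 included):
  sum over n of the probability that the first visit to j happens at time n.\<close>
definition Qmat :: "nat \<Rightarrow> (nat \<Rightarrow> nat \<Rightarrow> real) \<Rightarrow> nat \<Rightarrow> nat \<Rightarrow> real" where
  "Qmat d P i j = (if i = j then 1 else (\<Sum>n. taboo_prob d P j (Suc n) i j))"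

definition gvec :: "nat \<Rightarrow> (nat \<Rightarrow> nat \<Rightarrow> real) \<Rightarrow> (nat \<Rightarrow> real) \<Rightarrow> nat \<Rightarrow> nat \<Rightarrow> real" where
  "gvec d P gam i = (\<lambda>j. ln (1 + Qmat d P j i * gam i))"

definition dotd :: "nat \<Rightarrow> (nat \<Rightarrow> real) \<Rightarrow> (nat \<Rightarrow> real) \<Rightarrow> real" where
  "dotd d u v = (\<Sum>k\<in>{1..d}. u k * v k)"

definition Gamma_set :: "nat \<Rightarrow> (nat \<Rightarrow> nat \<Rightarrow> real) \<Rightarrow> (nat \<Rightarrow> real) set" where
  "Gamma_set d P = {gam. (\<forall>i\<in>{1..d}. gam i \<ge> 0) \<and>
     (\<forall>i\<in>{1..d}. \<forall>v. (\<forall>k\<in>{1..d}. v k \<ge> 0) \<and> (\<exists>k\<in>{1..d}. v k \<noteq> 0) \<and> v i = 0 \<longrightarrow>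
        dotd d (gvec d P gam i) v < Max ((\<lambda>j. dotd d (gvec d P gam j) v) ` {1..d}))}"

definition Sigma_fun :: "nat \<Rightarrow> real \<Rightarrow> (nat \<Rightarrow> real) \<Rightarrow> real" where
  "Sigma_fun d q gam = (\<Sum>j\<in>{1..d}.
     (Max ((\<lambda>i. ln (1 + q * gam i)) ` {1..d}) - ln (1 + q * gam j)) /
     (ln (1 + gam j) - ln (1 + q * gam j)))"

end

theory Submission
  imports Defs
begin

lemma row_sum:
  assumes unif: "\<forall>i\<in>{1..d}. \<forall>j\<in>{1..d}. i \<noteq> j \<longrightarrow> P i j = p"
    and diag: "\<forall>i\<in>{1..d}. P i i = 0"
    and i: "i \<in> {1..d}" and k: "k \<in> {1..d} - {i}"
  shows "(\<Sum>l\<in>{1..d} - {i}. P k l) = (real d - 2) * p"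
proof -
  have "(\<Sum>l\<in>{1..d} - {i}. P k l) = P k k + (\<Sum>l\<in>{1..d} - {i} - {k}. P k l)"
    using k by (subst sum.remove[of _ k]) auto
  also have "\<dots> = (\<Sum>l\<in>{1..d} - {i} - {k}. p)"
    using k diag unif by (auto intro!: sum.cong)
  also have "card ({1..d} - {i} - {k}) = d - 2" using i k by (auto simp: card_Diff_subset)
  moreover have "d \<ge> 2" using i k by auto
  ultimately show ?thesis by (simp add: of_nat_diff)
qed

lemma taboo_mass:
  assumes unif: "\<forall>i\<in>{1..d}. \<forall>j\<in>{1..d}. i \<noteq> j \<longrightarrow> P i j = p"
    and diag: "\<forall>i\<in>{1..d}. P i i = 0"
    and i: "i \<in> {1..d}" and j: "j \<in> {1..d} - {i}"
  shows "(\<Sum>k\<in>{1..d} - {i}. taboo_prob d P i n j k) = ((real d - 2) * p) ^ n"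
proof (induction n)
  case 0
  then show ?case using j by (simp add: sum.delta)
next
  case (Suc n)
  have "(\<Sum>l\<in>{1..d} - {i}. taboo_prob d P i (Suc n) j l)
      = (\<Sum>l\<in>{1..d} - {i}. \<Sum>k\<in>{1..d} - {i}. taboo_prob d P i n j k * P k l)" by simp
  also have "\<dots> = (\<Sum>k\<in>{1..d} - {i}. taboo_prob d P i n j k * (\<Sum>l\<in>{1..d} - {i}. P k l))"
    by (subst sum.swap) (simp add: sum_distrib_left)
  also have "\<dots> = (\<Sum>k\<in>{1..d} - {i}. taboo_prob d P i n j k * ((real d - 2) * p))"
    using row_sum[OF unif diag i] by (auto intro!: sum.cong)
  also have "\<dots> = ((real d - 2) * p) ^ Suc n" using Suc by (simp add: sum_distrib_right[symmetric])
  finally show ?case .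
qed

lemma taboo_hit:
  assumes unif: "\<forall>i\<in>{1..d}. \<forall>j\<in>{1..d}. i \<noteq> j \<longrightarrow> P i j = p"
    and diag: "\<forall>i\<in>{1..d}. P i i = 0"
    and i: "i \<in> {1..d}" and j: "j \<in> {1..d} - {i}"
  shows "taboo_prob d P i (Suc n) j i = p * ((real d - 2) * p) ^ n"
proof -
  have "taboo_prob d P i (Suc n) j i = (\<Sum>k\<in>{1..d} - {i}. taboo_prob d P i n j k * p)"
    using unif i by (auto intro!: sum.cong)
  also have "\<dots> = p * ((real d - 2) * p) ^ n"
    using taboo_mass[OF unif diag i j, of n] by (simp add: sum_distrib_left[symmetric] mult.commute)
  finally show ?thesis .
qed

theorem proposition3p3:
  fixes d :: nat and lam mu :: "nat \<Rightarrow> real" and P :: "nat \<Rightarrow> nat \<Rightarrow> real"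
    and p q :: real and gam :: "nat \<Rightarrow> real"
  assumes "d \<ge> 2"
    and "jackson_network d lam mu P"
    and "hypA d lam mu P"
    and "hypB d lam mu P"
    and "\<forall>i\<in>{1..d}. \<forall>j\<in>{1..d}. i \<noteq> j \<longrightarrow> P i j = p"
    and "p < 1 / (real d - 1)"
    and "q = p / (1 - (real d - 2) * p)"
  shows "gam \<in> Gamma_set d P \<longleftrightarrow> (\<forall>i\<in>{1..d}. gam i > 0) \<and> Sigma_fun d q gam < 1"
proof -
  note unif = assms(5)
  define D where "D = {1..d::nat}"
  have diag: "\<forall>i\<in>{1..d}. P i i = 0" using assms(2) by (simp add: jackson_network_def)
  have "P 1 2 \<ge> 0" using assms(1,2) by (simp add: jackson_network_def)
  hence p0: "p \<ge> 0" using unif assms(1) by auto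
  define r where "r = (real d - 2) * p"
  have d1: "real d - 1 > 0" using assms(1) by simp
  have pd1: "(real d - 1) * p < 1" using assms(6) d1 by (simp add: field_simps)
  have r0: "r \<ge> 0" using p0 assms(1) by (simp add: r_def)
  have r1: "r < 1" using pd1 p0 unfolding r_def by (smt (verit) mult_right_mono)
  have q0: "q \<ge> 0" using assms(7) p0 r1 r_def by simp
  have pr: "p < 1 - r" using pd1 unfolding r_def by (simp add: algebra_simps)
  have q1: "q < 1" using assms(7) r1 pr unfolding r_def[symmetric] by simp
  have Q: "Qmat d P k i = q" if "i \<in> D" "k \<in> D" "k \<noteq> i" for i k
  proof -
    have "(\<lambda>n. p * r ^ n) sums (p * (1 / (1 - r)))"
      by (rule sums_mult, rule geometric_sums) (use r0 r1 in simp)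
    hence "(\<lambda>n. taboo_prob d P i (Suc n) k i) sums q"
      using taboo_hit[OF unif diag, of i k] that assms(7) unfolding D_def r_def by simp
    thus ?thesis using that unfolding Qmat_def by (simp add: sums_iff)
  qed
  define a where "a k = ln (1 + q * gam k)" for k
  define b where "b k = ln (1 + gam k)" for k
  define c where "c k = b k - a k" for k
  define A where "A = Max (a ` D)"
  have finD: "finite D" and neD: "D \<noteq> {}" using assms(1) by (auto simp: D_def)
  have A_ge: "a k \<le> A" if "k \<in> D" for k using that finD unfolding A_def by simp
  obtain i0 where i0: "i0 \<in> D" "a i0 = A"
  proof -
    have "A \<in> a ` D" using Max_in[of "a ` D"] finD neD unfolding A_def by auto
    thus ?thesis using that by auto
  qed
  have dot: "dotd d (gvec d P gam i) v = a i * (\<Sum>k\<in>D. v k) + c i * v i" if "i \<in> D" for i v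
  proof -
    have "dotd d (gvec d P gam i) v = (\<Sum>k\<in>D. a i * v k + (if k = i then c i * v k else 0))"
      unfolding dotd_def gvec_def D_def
      using Q[of i] that by (auto simp: a_def b_def c_def Qmat_def D_def algebra_simps intro!: sum.cong)
    also have "\<dots> = a i * (\<Sum>k\<in>D. v k) + c i * v i"
      using that finD by (simp add: sum.distrib sum_distrib_left)
    finally show ?thesis .
  qed
  have Sig: "Sigma_fun d q gam = (\<Sum>j\<in>D. (A - a j) / c j)"
    unfolding Sigma_fun_def A_def D_def a_def b_def c_def by simp
  have cpos: "c k > 0" if "gam k > 0" for k
  proof -
    have "1 + q * gam k < 1 + gam k" using q1 that by simp
    moreover have "0 < 1 + q * gam k" using q0 that by (simp add: add_pos_nonneg)
    ultimately show ?thesis unfolding c_def a_def b_def by simp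
  qed
  show ?thesis
  proof
    assume G: "gam \<in> Gamma_set d P"
    have gnn: "\<forall>i\<in>D. gam i \<ge> 0" using G by (simp add: Gamma_set_def D_def)
    have cond: "\<And>i v. i \<in> D \<Longrightarrow> (\<forall>k\<in>D. v k \<ge> 0) \<Longrightarrow> (\<exists>k\<in>D. v k \<noteq> 0) \<Longrightarrow> v i = 0 \<Longrightarrow>
        dotd d (gvec d P gam i) v < Max ((\<lambda>j. dotd d (gvec d P gam j) v) ` D)"
      using G by (simp add: Gamma_set_def D_def)
    have gpos: "\<forall>i\<in>D. gam i > 0"
    proof (rule ccontr)
      assume "\<not> ?thesis"
      then obtain j where j: "j \<in> D" "gam j \<le> 0" by auto
      hence gj: "gam j = 0" using gnn by force
      have ann: "a k \<ge> 0" if "k \<in> D" for k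
        using gnn that q0 unfolding a_def by simp
      obtain i where i: "i \<in> D" "i \<noteq> j" "a i = A"
      proof (cases "i0 = j")
        case True
        define i where "i = (if j = 1 then 2 else (1::nat))"
        have "i \<in> D" "i \<noteq> j" using assms(1) j by (auto simp: i_def D_def)
        moreover have "A = 0" using True i0 gj by (simp add: a_def)
        ultimately show ?thesis using that A_ge ann by force
      next
        case False thus ?thesis using that i0 by auto
      qed
      define v where "v k = (if k = j then 1 else (0::real))" for k
      have sv: "(\<Sum>k\<in>D. v k) = 1" using finD j by (simp add: v_def)
      have "dotd d (gvec d P gam i) v < Max ((\<lambda>j. dotd d (gvec d P gam j) v) ` D)"
        by (rule cond) (use i j in \<open>auto simp: v_def\<close>)
      moreover have "Max ((\<lambda>j. dotd d (gvec d P gam j) v) ` D) \<le> A"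
      proof (subst Max_le_iff)
        show "\<forall>x\<in>(\<lambda>j. dotd d (gvec d P gam j) v) ` D. x \<le> A"
        proof
          fix x assume "x \<in> (\<lambda>j. dotd d (gvec d P gam j) v) ` D"
          then obtain k where k: "k \<in> D" "x = dotd d (gvec d P gam k) v" by auto
          show "x \<le> A"
          proof (cases "k = j")
            case True
            have "x = b j" using k True dot[of k v] sv by (simp add: v_def c_def)
            thus ?thesis using gj ann[OF i(1)] i by (simp add: b_def)
          next
            case False
            thus ?thesis using k dot[of k v] sv A_ge[of k] by (simp add: v_def)
          qed
        qed
      qed (use finD neD in auto)
      moreover have "dotd d (gvec d P gam i) v = A" using dot[of i v] i sv by (simp add: v_def)
      ultimately show False by simp
    qed
    moreover have "Sigma_fun d q gam < 1"
    proof (rule ccontr)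
      assume "\<not> ?thesis"
      hence S1: "(\<Sum>j\<in>D. (A - a j) / c j) \<ge> 1" using Sig by simp
      define w where "w k = (A - a k) / c k" for k
      have wnn: "\<forall>k\<in>D. w k \<ge> 0" using gpos cpos A_ge unfolding w_def by (meson diff_ge_0_iff_ge divide_nonneg_pos)
      have wi0: "w i0 = 0" using i0 by (simp add: w_def)
      have "\<exists>k\<in>D. w k \<noteq> 0"
      proof (rule ccontr)
        assume "\<not> ?thesis"
        hence "(\<Sum>j\<in>D. w j) = 0" by simp
        thus False using S1 by (simp add: w_def)
      qed
      hence lt: "dotd d (gvec d P gam i0) w < Max ((\<lambda>j. dotd d (gvec d P gam j) w) ` D)"
        using cond[OF i0(1) wnn _ wi0] by blast
      define S where "S = (\<Sum>k\<in>D. w k)"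
      have S1': "S \<ge> 1" using S1 by (simp add: S_def w_def)
      have "Max ((\<lambda>j. dotd d (gvec d P gam j) w) ` D) \<le> A * S"
      proof (subst Max_le_iff)
        show "\<forall>x\<in>(\<lambda>j. dotd d (gvec d P gam j) w) ` D. x \<le> A * S"
        proof
          fix x assume "x \<in> (\<lambda>j. dotd d (gvec d P gam j) w) ` D"
          then obtain k where k: "k \<in> D" "x = dotd d (gvec d P gam k) w" by auto
          have ck: "c k > 0" using cpos gpos k by auto
          have "x = a k * S + (A - a k)" using k dot[of k w] ck by (simp add: S_def w_def)
          moreover have "(A - a k) * (S - 1) \<ge> 0" using A_ge[OF k(1)] S1' by simp
          ultimately show "x \<le> A * S" by (simp add: algebra_simps)
        qed
      qed (use finD neD in auto)
      moreover have "dotd d (gvec d P gam i0) w = A * S" using dot[of i0 w] i0 wi0 by (simp add: S_def)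
      ultimately show False using lt by simp
    qed
    ultimately show "(\<forall>i\<in>{1..d}. gam i > 0) \<and> Sigma_fun d q gam < 1" by (simp add: D_def)
  next
    assume H: "(\<forall>i\<in>{1..d}. gam i > 0) \<and> Sigma_fun d q gam < 1"
    hence gpos: "\<forall>i\<in>D. gam i > 0" and Sl: "(\<Sum>j\<in>D. (A - a j) / c j) < 1"
      using Sig by (auto simp: D_def)
    have "\<forall>i\<in>D. \<forall>v::nat\<Rightarrow>real. (\<forall>k\<in>D. v k \<ge> 0) \<and> (\<exists>k\<in>D. v k \<noteq> 0) \<and> v i = 0 \<longrightarrow>
        dotd d (gvec d P gam i) v < Max ((\<lambda>j. dotd d (gvec d P gam j) v) ` D)"
    proof (intro ballI allI impI)
      fix i and v :: "nat \<Rightarrow> real" assume i: "i \<in> D" and hv: "(\<forall>k\<in>D. v k \<ge> 0) \<and> (\<exists>k\<in>D. v k \<noteq> 0) \<and> v i = 0"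
      define V where "V = (\<Sum>k\<in>D. v k)"
      obtain k0 where k0: "k0 \<in> D" "v k0 \<noteq> 0" using hv by auto
      have "v k0 \<le> V" unfolding V_def using hv k0 finD by (intro member_le_sum) auto
      hence Vpos: "V > 0" using hv k0 by force
      show "dotd d (gvec d P gam i) v < Max ((\<lambda>j. dotd d (gvec d P gam j) v) ` D)"
      proof (rule ccontr)
        assume "\<not> ?thesis"
        hence M: "Max ((\<lambda>j. dotd d (gvec d P gam j) v) ` D) \<le> a i * V"
          using dot[of i v] i hv by (simp add: V_def)
        have le: "dotd d (gvec d P gam j) v \<le> a i * V" if "j \<in> D" for j
        proof -
          have "dotd d (gvec d P gam j) v \<le> Max ((\<lambda>j. dotd d (gvec d P gam j) v) ` D)"
            using that finD by (intro Max_ge) auto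
          thus ?thesis using M by linarith
        qed
        have vj: "v j \<le> V * ((A - a j) / c j)" if "j \<in> D" for j
        proof -
          have cj: "c j > 0" using cpos gpos that by auto
          have "a j * V + c j * v j \<le> a i * V" using le[OF that] dot[OF that, of v] by (simp add: V_def)
          moreover have "a i * V \<le> A * V" using A_ge[OF i] Vpos by simp
          ultimately have "c j * v j \<le> (A - a j) * V" by (simp add: algebra_simps)
          thus ?thesis using cj by (simp add: field_simps)
        qed
        have "V \<le> (\<Sum>j\<in>D. V * ((A - a j) / c j))" unfolding V_def
          using vj by (intro sum_mono) (simp add: V_def)
        also have "\<dots> = V * (\<Sum>j\<in>D. (A - a j) / c j)" by (simp add: sum_distrib_left)
        also have "\<dots> < V" using Sl Vpos by simp
        finally show False by simp
      qed
    qed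
    thus "gam \<in> Gamma_set d P" using gpos by (auto simp: Gamma_set_def D_def less_imp_le)
  qed
qed

end
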